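(* Let $\mathcal{X}$ and $\mathcal{Z}$ be Euclidean spaces. Let $\mathfrak{S}:\mathcal{X}\to\mathcal{Z}$ be a differentiable mapping such that $\mathfrak{S}$ and its G\^ateaux derivative $\mathrm{D}\mathfrak{S}$ are Lipschitz continuous; let $g:\mathcal{Z}\to\mathbb{R}$ be Lipschitz continuous and $\eta$-weakly convex for some $\eta>0$; let $C\subset\mathcal{X}$ be a nonempty closed prox-regular set; set $F:=g\circ\mathfrak{S}$ and assume $\mathop{\mathrm{argmin}}_{x\in C}F(x)\neq\emptyset$. Let $(x_n)_{n\ge1}\subset C$ converge to some $\bar x\in C$ and let $(\gamma_n)_{n\ge1}\subset(0,\infty)$ converge to some $\bar\gamma\ge 0$. Let $(\mu_n)_{n\ge1}\subset(0,(2\eta)^{-1}]$ decrease to $0$ and set $F_n:={}^{\mu_n}g\circ\mathfrak{S}$ for $n\in\mathbb{N}$. Then $$\liminf_{n\to\infty}\mathcal{M}_{\gamma_n}^{F_n,\iota_C}(x_n)\ \ge\ \begin{cases}\mathcal{M}_{\bar\gamma}^{F,\iota_C}(\bar x), & \text{if } \bar\gamma>0,\\ \mathrm{dist}\big(0,\partial_F(F+\iota_C)(\bar x)\big), & \text{if } \bar\gamma=0.\end{cases}$$ Moreover, if $\liminf_{n\to\infty}\mathcal{M}_{\gamma_n}^{F_n,\iota_C}(x_n)=0$, then $\bar x$ satisfies $0\in\partial_F(F+\iota_C)(\bar x)$.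
   Context: Prox-regularity of $C$: the metric projection $P_C(\bar x):=\mathop{\mathrm{argmin}}_{x\in C}\|\bar x-x\|$ is single-valued on some open subset of $\mathcal{X}$ containing $C$. $\iota_C$ is the indicator function of $C$ ($0$ on $C$, $+\infty$ elsewhere). For a proper $J:\mathcal{X}\to\mathbb{R}\cup\{+\infty\}$, the Fr\'echet subdifferential $\partial_F J(\bar x)$ at $\bar x\in\mathrm{dom}\,J$ is the set of $v$ with $\sup_{\epsilon>0}\inf_{0<\|x-\bar x\|<\epsilon}\frac{J(x)-J(\bar x)-\langle v,x-\bar x\rangle}{\|x-\bar x\|}\ge0$ (empty if $\bar x\notin\mathrm{dom}\,J$); for differentiable $J$ with continuous gradient it is $\{\nabla J(\bar x)\}$. For $\mu\in(0,\eta^{-1})$, the proximity operator $\mathrm{prox}_{\mu g}(\bar z):=\mathop{\mathrm{argmin}}_{z\in\mathcal{Z}}\big(g(z)+\frac{1}{2\mu}\|z-\bar z\|^2\big)$ is single-valued, and the Moreau envelope is ${}^{\mu}g(\bar z):=g(\mathrm{prox}_{\mu g}(\bar z))+\frac{1}{2\mu}\|\mathrm{prox}_{\mu g}(\bar z)-\bar z\|^2$, which is continuously differentiable. For a function $J:\mathcal{X}\to\mathbb{R}$, $\gamma>0$ and $\bar x\in\mathcal{X}$, $\mathcal{M}_{\gamma}^{J,\iota_C}(\bar x):=\mathrm{dist}\big(0,\{(\bar x-p)/\gamma : p\in P_C(\bar x-\gamma v),\ v\in\partial_F J(\bar x)\}\big)$, with $\mathrm{dist}(0,S)=\inf_{s\in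 S}\|s\|$. *)

theory Defs
  imports "HOL-Analysis.Analysis"
begin

definition iota :: "'a set \<Rightarrow> 'a \<Rightarrow> ereal" where
  "iota C x = (if x \<in> C then 0 else \<infinity>)"

definition proj :: "'a::real_normed_vector set \<Rightarrow> 'a \<Rightarrow> 'a set" where
  "proj C xb = {p \<in> C. \<forall>q\<in>C. norm (xb - p) \<le> norm (xb - q)}"

definition prox_regular :: "'a::real_normed_vector set \<Rightarrow> bool" where
  "prox_regular C \<longleftrightarrow> (\<exists>U. open U \<and> C \<subseteq> U \<and> (\<forall>x\<in>U. \<exists>!p. p \<in> proj C x))"

definition weakly_convex :: "real \<Rightarrow> ('a::real_normed_vector \<Rightarrow> real) \<Rightarrow> bool" where
  "weakly_convex eta g \<longleftrightarrow> convex_on UNIV (\<lambda>z. g z + eta / 2 * (norm z)\<^sup>2)"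

definition frechet_subdiff :: "('a::real_inner \<Rightarrow> ereal) \<Rightarrow> 'a \<Rightarrow> 'a set" where
  "frechet_subdiff J xb =
     (if J xb = \<infinity> then {}
      else {v. (SUP e\<in>{0<..}. INF x\<in>{x. 0 < norm (x - xb) \<and> norm (x - xb) < e}.
                 (J x - J xb - ereal (inner v (x - xb))) / ereal (norm (x - xb))) \<ge> 0})"

definition prox :: "real \<Rightarrow> ('a::real_normed_vector \<Rightarrow> real) \<Rightarrow> 'a \<Rightarrow> 'a" where
  "prox mu g zb = (THE p. \<forall>z. g p + (norm (p - zb))\<^sup>2 / (2 * mu) \<le> g z + (norm (z - zb))\<^sup>2 / (2 * mu))"

definition moreau :: "real \<Rightarrow> ('a::real_normed_vector \<Rightarrow> real) \<Rightarrow> 'a \<Rightarrow> real" where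
  "moreau mu g zb = g (prox mu g zb) + (norm (prox mu g zb - zb))\<^sup>2 / (2 * mu)"

text \<open>Distance from 0 to a set, with inf of the empty set = +infinity.\<close>
definition dist0 :: "'a::real_normed_vector set \<Rightarrow> ereal" where
  "dist0 S = (INF s\<in>S. ereal (norm s))"

definition Mmeas :: "real \<Rightarrow> ('a::real_inner \<Rightarrow> real) \<Rightarrow> 'a set \<Rightarrow> 'a \<Rightarrow> ereal" where
  "Mmeas gamma J C xb =
     dist0 {(1 / gamma) *\<^sub>R (xb - p) | p v.
              v \<in> frechet_subdiff (\<lambda>x. ereal (J x)) xb \<and> p \<in> proj C (xb - gamma *\<^sub>R v)}"

end

theory Submission
  imports Defs
begin


lemma norm_comb:
  fixes a b :: "'a::real_inner"
  shows "(norm ((1-t) *\<^sub>R a + t *\<^sub>R b))\<^sup>2 = (1-t)*(norm a)\<^sup>2 + t*(norm b)\<^sup>2 - t*(1-t)*(norm (a-b))\<^sup>2"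
  unfolding power2_norm_eq_inner
  by (simp add: inner_simps algebra_simps)

lemma norm_shift:
  fixes a b :: "'a::real_inner"
  shows "(norm (a + b))\<^sup>2 = (norm a)\<^sup>2 + 2 * inner a b + (norm b)\<^sup>2"
  unfolding power2_norm_eq_inner
  by (simp add: inner_simps algebra_simps inner_commute)



lemma aux_lin:
  fixes gm gp gq E Nm Np Nq D :: real
  shows "gm \<le> (gp+gq)/2 + 1/8*E \<Longrightarrow> Nm = 1/2*Np + 1/2*Nq - 1/4*D \<Longrightarrow> E \<le> D \<Longrightarrow> 0 < E \<Longrightarrow> gm + Nm < (gp + Np + (gq + Nq))/2"
  by (simp add: field_simps)

lemma prox_ex1:
  fixes g :: "'a::euclidean_space \<Rightarrow> real"
  assumes lip: "L-lipschitz_on UNIV g" and wc: "weakly_convex eta g" and eta: "eta > 0"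
    and mu: "0 < mu" "mu \<le> 1/(2*eta)"
  shows "\<exists>!p. \<forall>z. g p + (norm (p - zb))\<^sup>2 / (2*mu) \<le> g z + (norm (z - zb))\<^sup>2 / (2*mu)"
proof -
  define h where "h z = g z + (norm (z - zb))\<^sup>2 / (2*mu)" for z
  have L0: "0 \<le> L" using lip by (simp add: lipschitz_on_def)
  have gl: "\<bar>g a - g b\<bar> \<le> L * norm (a - b)" for a b
    using lip by (simp add: lipschitz_on_def dist_norm dist_real_def)
  have contg: "continuous_on UNIV g" using lip lipschitz_on_continuous_on by blast
  have conth: "continuous_on A h" for A unfolding h_def
    using mu by (intro continuous_intros continuous_on_subset[OF contg]) auto
  obtain p where p: "p \<in> cball zb (2*mu*L)" and pmin: "\<forall>y\<in>cball zb (2*mu*L). h p \<le> h y"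
  proof -
    have "cball zb (2*mu*L) \<noteq> {}" using L0 mu by (simp add: mult_nonneg_nonneg not_less)
    then show ?thesis using continuous_attains_inf[OF compact_cball _ conth, of zb "2*mu*L"] that by blast
  qed
  have ex: "\<forall>z. h p \<le> h z"
  proof
    fix z
    show "h p \<le> h z"
    proof (cases "z \<in> cball zb (2*mu*L)")
      case True then show ?thesis using pmin by auto
    next
      case False
      define d where "d = norm (z - zb)"
      have dgt: "d > 2*mu*L" using False by (simp add: d_def dist_norm norm_minus_commute)
      have d0: "d > 0" using dgt L0 mu by (smt (verit) mult_nonneg_nonneg)
      have "L * d < d\<^sup>2 / (2*mu)"
      proof -
        have "2*mu*L*d < d*d" using dgt d0 by (simp add: mult_strict_right_mono)
        then show ?thesis using mu by (simp add: field_simps power2_eq_square)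
      qed
      moreover have "g zb - L*d \<le> g z" using gl[of z zb] by (simp add: d_def abs_le_iff)
      ultimately have "h zb < h z" unfolding h_def d_def by simp
      moreover have "h p \<le> h zb" using pmin L0 mu by simp
      ultimately show ?thesis by simp
    qed
  qed
  have uniq: "q = p" if q: "\<forall>z. h q \<le> h z" for q
  proof (rule ccontr)
    assume ne: "q \<noteq> p"
    define m where "m = (1 - 1/2) *\<^sub>R p + (1/2) *\<^sub>R q"
    have cv: "convex_on UNIV (\<lambda>z. g z + eta / 2 * (norm z)\<^sup>2)" using wc by (simp add: weakly_convex_def)
    have G: "g m + eta/2*(norm m)\<^sup>2 \<le> (1-1/2)*(g p + eta/2*(norm p)\<^sup>2) + (1/2)*(g q + eta/2*(norm q)\<^sup>2)"
      unfolding m_def using convex_onD[OF cv, of "1/2" p q] by simp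
    have n1: "(norm m)\<^sup>2 = (1-1/2)*(norm p)\<^sup>2 + (1/2)*(norm q)\<^sup>2 - (1/2)*(1-1/2)*(norm (p-q))\<^sup>2"
      unfolding m_def by (rule norm_comb)
    have "m - zb = (1 - 1/2) *\<^sub>R (p - zb) + (1/2) *\<^sub>R (q - zb)" unfolding m_def by (simp add: algebra_simps flip: scaleR_add_left)
    then have n2: "(norm (m - zb))\<^sup>2 = (1-1/2)*(norm (p-zb))\<^sup>2 + (1/2)*(norm (q-zb))\<^sup>2 - (1/2)*(1-1/2)*(norm (p-q))\<^sup>2"
      using norm_comb[of "1/2" "p - zb" "q - zb"] by simp
    have pos: "norm (p - q) > 0" using ne by simp
    have c1: "1/(2*mu) \<ge> eta" using mu eta by (simp add: field_simps)
    have "h m < (h p + h q)/2"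
    proof -
      have "h m = g m + (norm (m - zb))\<^sup>2 / (2*mu)" by (simp add: h_def)
      have A: "(norm (p-q))\<^sup>2 / (2*mu) \<ge> eta * (norm (p-q))\<^sup>2" using c1 pos
        by (metis divide_inverse mult.commute mult_right_mono zero_le_power2 inverse_eq_divide mult_1 times_divide_eq_right)
      have B: "eta * (norm (p-q))\<^sup>2 > 0" using eta pos by simp
      have n2': "(norm (m-zb))\<^sup>2/(2*mu) = (1/2)*((norm(p-zb))\<^sup>2/(2*mu)) + (1/2)*((norm(q-zb))\<^sup>2/(2*mu)) - (1/4)*((norm(p-q))\<^sup>2/(2*mu))"
        unfolding n2 by (simp add: add_divide_distrib diff_divide_distrib)
      have G': "g m \<le> (g p + g q)/2 + (1/8)*(eta*(norm(p-q))\<^sup>2)"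
        using G unfolding n1 by (simp add: algebra_simps add_divide_distrib)
      show ?thesis unfolding h_def by (rule aux_lin[OF G' n2' A B])
    qed
    moreover have "h p \<le> h m" "h q \<le> h m" using ex q by auto
    ultimately show False by simp
  qed
  show ?thesis unfolding h_def[symmetric] using ex uniq by blast
qed

lemma le_eps_aux:
  fixes a b c :: real
  assumes c: "c \<ge> 0" and h: "\<And>t. 0 < t \<Longrightarrow> t \<le> 1 \<Longrightarrow> a \<le> b + t * c"
  shows "a \<le> b"
proof (rule field_le_epsilon)
  fix e :: real assume e: "0 < e"
  define t where "t = e / (e + c + 1)"
  have t0: "0 < t" "t \<le> 1" using e c by (simp_all add: t_def field_simps)
  have "t * c \<le> e" using e c by (simp add: t_def field_simps)
  moreover have "a \<le> b + t * c" using h[OF t0] .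
  ultimately show "a \<le> b + e" by linarith
qed

context
  fixes g :: "'a::euclidean_space \<Rightarrow> real" and L eta mu :: real
  assumes lip: "L-lipschitz_on UNIV g" and wc: "weakly_convex eta g" and eta: "eta > 0"
    and mu: "0 < mu" "mu \<le> 1/(2*eta)"
begin

lemma prox_min: "g (prox mu g zb) + (norm (prox mu g zb - zb))\<^sup>2 / (2*mu) \<le> g z + (norm (z - zb))\<^sup>2 / (2*mu)"
proof -
  have ex1: "\<exists>!p. \<forall>z. g p + (norm (p - zb))\<^sup>2 / (2*mu) \<le> g z + (norm (z - zb))\<^sup>2 / (2*mu)"
    by (rule prox_ex1[OF lip wc eta mu])
  show ?thesis using theI'[OF ex1] unfolding prox_def by blast
qed

lemma moreau_eq: "moreau mu g zb = g (prox mu g zb) + (norm (prox mu g zb - zb))\<^sup>2 / (2*mu)"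
  unfolding moreau_def by simp

lemma prox_near: "norm (prox mu g zb - zb) \<le> 2*mu*L"
proof -
  define p where "p = prox mu g zb"
  have pmin: "g p + (norm (p - zb))\<^sup>2 / (2*mu) \<le> g z + (norm (z - zb))\<^sup>2 / (2*mu)" for z
    unfolding p_def by (rule prox_min)
  have L0: "0 \<le> L" using lip by (simp add: lipschitz_on_def)
  have gl: "\<bar>g a - g b\<bar> \<le> L * norm (a - b)" for a b
    using lip by (simp add: lipschitz_on_def dist_norm dist_real_def)
  define d where "d = norm (p - zb)"
  have "g p + d\<^sup>2/(2*mu) \<le> g zb" using pmin[of zb] by (simp add: d_def)
  moreover have "g zb \<le> g p + L * d" using gl[of zb p] by (simp add: d_def norm_minus_commute abs_le_iff)
  ultimately have "d\<^sup>2/(2*mu) \<le> L*d" by linarith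
  then have "d * d \<le> (2*mu*L) * d" using mu by (simp add: field_simps power2_eq_square)
  moreover have "0 \<le> 2*mu*L" using L0 mu by simp
  moreover have "d \<ge> 0" by (simp add: d_def)
  ultimately have "d \<le> 2*mu*L"
    by (cases "d = 0") (auto intro: mult_right_le_imp_le)
  then show ?thesis by (simp add: d_def p_def)
qed

lemma prox_sub: "g z' \<ge> g (prox mu g zb) + inner ((1/mu) *\<^sub>R (zb - prox mu g zb)) (z' - prox mu g zb) - eta/2 * (norm (z' - prox mu g zb))\<^sup>2"
proof -
  define p where "p = prox mu g zb"
  have pmin: "g p + (norm (p - zb))\<^sup>2 / (2*mu) \<le> g z + (norm (z - zb))\<^sup>2 / (2*mu)" for z
    unfolding p_def by (rule prox_min)
  define A where "A = inner (p - zb) (z' - p)"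
  define D where "D = (norm (z' - p))\<^sup>2"
  have D0: "D \<ge> 0" by (simp add: D_def)
  have key: "g p \<le> (g z' + eta/2*D + A/mu) + t * (D/(2*mu))" if t: "0 < t" "t \<le> 1" for t
  proof -
    define m where "m = (1-t) *\<^sub>R p + t *\<^sub>R z'"
    have cv: "convex_on UNIV (\<lambda>z. g z + eta / 2 * (norm z)\<^sup>2)" using wc by (simp add: weakly_convex_def)
    have G: "g m + eta/2*(norm m)\<^sup>2 \<le> (1-t)*(g p + eta/2*(norm p)\<^sup>2) + t*(g z' + eta/2*(norm z')\<^sup>2)"
      unfolding m_def using convex_onD[OF cv, of t p z'] t by simp
    have n1: "(norm m)\<^sup>2 = (1-t)*(norm p)\<^sup>2 + t*(norm z')\<^sup>2 - t*(1-t)*D"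
      unfolding m_def D_def using norm_comb[of t p z'] by (simp add: norm_minus_commute)
    have 1: "g m \<le> (1-t)*g p + t*g z' + t*(eta/2*(1-t)*D)"
      using G unfolding n1 by (simp add: algebra_simps add_divide_distrib diff_divide_distrib)
    have mz: "m - zb = (p - zb) + t *\<^sub>R (z' - p)" unfolding m_def by (simp add: algebra_simps)
    have 2: "(norm (m - zb))\<^sup>2 = (norm (p - zb))\<^sup>2 + 2*(t*A) + t\<^sup>2*D"
      unfolding mz norm_shift[of "p - zb" "t *\<^sub>R (z' - p)"] by (simp add: A_def D_def power_mult_distrib)
    have two': "(norm (m - zb))\<^sup>2/(2*mu) = (norm (p - zb))\<^sup>2/(2*mu) + t*(A/mu) + t*(t*(D/(2*mu)))"
      unfolding 2 using mu by (simp add: field_simps power2_eq_square)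
    have 3: "g p + (norm (p - zb))\<^sup>2/(2*mu) \<le> g m + (norm (m - zb))\<^sup>2/(2*mu)" by (rule pmin)
    have "t * g p \<le> t * ((g z' + eta/2*(1-t)*D + A/mu) + t * (D/(2*mu)))"
      using 1 two' 3 by (simp add: algebra_simps)
    then have "g p \<le> (g z' + eta/2*(1-t)*D + A/mu) + t * (D/(2*mu))" using t by simp
    moreover have "eta/2*(1-t)*D \<le> eta/2*D"
    proof -
      have "(1-t)*D \<le> D" using t D0 by (intro mult_left_le_one_le) auto
      then have "eta/2*((1-t)*D) \<le> eta/2*D" using eta by (intro mult_left_mono) auto
      then show ?thesis by (simp add: mult.assoc)
    qed
    ultimately show ?thesis by linarith
  qed
  have "g p \<le> g z' + eta/2*D + A/mu"
    by (rule le_eps_aux[of "D/(2*mu)"]) (use key D0 mu in auto)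
  moreover have "inner ((1/mu) *\<^sub>R (zb - p)) (z' - p) = - (A/mu)"
    by (simp add: A_def inner_diff_left inner_diff_right divide_inverse algebra_simps)
  ultimately show ?thesis by (simp add: D_def p_def)
qed

lemma moreau_up: "moreau mu g z' \<le> moreau mu g zb + inner ((1/mu) *\<^sub>R (zb - prox mu g zb)) (z' - zb) + (norm (z' - zb))\<^sup>2 / (2*mu)"
proof -
  define p where "p = prox mu g zb"
  have a: "moreau mu g z' \<le> g p + (norm (p - z'))\<^sup>2 / (2*mu)"
    unfolding moreau_def using prox_min[of z' p] by blast
  have b: "(norm (p - z'))\<^sup>2 = (norm (p - zb))\<^sup>2 + 2 * inner (p - zb) (zb - z') + (norm (zb - z'))\<^sup>2"
    using norm_shift[of "p - zb" "zb - z'"] by simp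
  have c: "inner ((1/mu) *\<^sub>R (zb - p)) (z' - zb) = inner (p - zb) (zb - z') / mu"
    by (simp add: inner_diff_left inner_diff_right divide_inverse algebra_simps)
  show ?thesis using a unfolding moreau_eq[of zb] p_def[symmetric] b c using mu
    by (simp add: add_divide_distrib norm_minus_commute)
qed

end


lemma ratio_ge_iff:
  fixes Jx :: ereal and a c n eps :: real
  assumes n: "n > 0" and nm: "Jx \<noteq> -\<infinity>"
  shows "((Jx - ereal a - ereal c) / ereal n \<ge> ereal (-eps)) \<longleftrightarrow> Jx \<ge> ereal (a + c - eps * n)"
proof (cases Jx)
  case (real b)
  have "(ereal b - ereal a - ereal c) / ereal n = ereal ((b - a - c)/n)" using n by simp
  then show ?thesis using real n by (simp add: field_simps)
next
  case PInf
  then show ?thesis using n by simp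
next
  case MInf
  then show ?thesis using nm by simp
qed

lemma fs_char:
  fixes J :: "'a::real_inner \<Rightarrow> ereal"
  assumes Jxb: "J xb = ereal a" and nm: "\<And>x. J x \<noteq> -\<infinity>"
  shows "v \<in> frechet_subdiff J xb \<longleftrightarrow>
    (\<forall>eps>0. \<exists>d>0. \<forall>x. 0 < norm (x - xb) \<and> norm (x - xb) < d \<longrightarrow>
        J x \<ge> ereal (a + inner v (x - xb) - eps * norm (x - xb)))"
    (is "_ \<longleftrightarrow> ?R")
proof -
  define R where "R x = (J x - J xb - ereal (inner v (x - xb))) / ereal (norm (x - xb))" for x
  define B where "B e = {x. 0 < norm (x - xb) \<and> norm (x - xb) < e}" for e :: real
  have mem: "v \<in> frechet_subdiff J xb \<longleftrightarrow> (SUP e\<in>{0<..}. INF x\<in>B e. R x) \<ge> 0"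
    unfolding frechet_subdiff_def R_def B_def using Jxb by simp
  have pt: "R x \<ge> ereal (-eps) \<longleftrightarrow> J x \<ge> ereal (a + inner v (x - xb) - eps * norm (x - xb))"
    if "0 < norm (x - xb)" for x eps
    unfolding R_def Jxb by (rule ratio_ge_iff[OF that nm])
  show ?thesis
  proof
    assume h: "v \<in> frechet_subdiff J xb"
    show ?R
    proof (intro allI impI)
      fix eps :: real assume e: "eps > 0"
      have "ereal (-eps) < 0" using e by simp
      also have "0 \<le> (SUP e\<in>{0<..}. INF x\<in>B e. R x)" using h mem by blast
      finally have "ereal (-eps) < (SUP e\<in>{0<..}. INF x\<in>B e. R x)" .
      then obtain d where d0: "d \<in> {0<..}" and d2: "ereal (-eps) < (INF x\<in>B d. R x)"
        unfolding less_SUP_iff by blast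
      have d: "d > 0" "ereal (-eps) < (INF x\<in>B d. R x)" using d0 d2 by auto
      have "J x \<ge> ereal (a + inner v (x - xb) - eps * norm (x - xb))"
        if "0 < norm (x - xb)" "norm (x - xb) < d" for x
      proof -
        have "x \<in> B d" using that by (simp add: B_def)
        then have "(INF x\<in>B d. R x) \<le> R x" by (rule INF_lower)
        then have "R x \<ge> ereal (-eps)" using d(2) by simp
        then show ?thesis using pt that(1) by blast
      qed
      then show "\<exists>d>0. \<forall>x. 0 < norm (x - xb) \<and> norm (x - xb) < d \<longrightarrow>
        J x \<ge> ereal (a + inner v (x - xb) - eps * norm (x - xb))" using d(1) by blast
    qed
  next
    assume h: ?R
    have "(SUP e\<in>{0<..}. INF x\<in>B e. R x) \<ge> 0"
    proof (rule ccontr)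
      assume "\<not> ?thesis"
      then have "(SUP e\<in>{0<..}. INF x\<in>B e. R x) < 0" by simp
      then obtain z where z: "(SUP e\<in>{0<..}. INF x\<in>B e. R x) < ereal z" "ereal z < 0"
        using ereal_dense2 by blast
      define eps where "eps = - z"
      have e: "eps > 0" using z(2) by (simp add: eps_def)
      obtain d where d: "d > 0" and dh: "\<And>x. 0 < norm (x - xb) \<Longrightarrow> norm (x - xb) < d \<Longrightarrow>
        J x \<ge> ereal (a + inner v (x - xb) - eps * norm (x - xb))"
        using h e by blast
      have "ereal (-eps) \<le> (INF x\<in>B d. R x)"
      proof (rule INF_greatest)
        fix x assume "x \<in> B d"
        then have "0 < norm (x - xb)" "norm (x - xb) < d" by (auto simp: B_def)
        then show "ereal (-eps) \<le> R x" using pt dh by blast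
      qed
      also have "\<dots> \<le> (SUP e\<in>{0<..}. INF x\<in>B e. R x)"
        using d by (intro SUP_upper) simp
      finally show False using z by (simp add: eps_def)
    qed
    then show "v \<in> frechet_subdiff J xb" using mem by simp
  qed
qed


lemma lipD: "L-lipschitz_on UNIV f \<Longrightarrow> norm (f a - f b) \<le> L * norm (a - b)"
  by (simp add: lipschitz_on_def dist_norm)

lemma sq_le_lip:
  assumes "L-lipschitz_on UNIV f"
  shows "(norm (f a - f b))\<^sup>2 \<le> L\<^sup>2 * (norm (a - b))\<^sup>2"
proof -
  have "norm (f a - f b) \<le> L * norm (a - b)" by (rule lipD[OF assms])
  then have "(norm (f a - f b))\<^sup>2 \<le> (L * norm (a - b))\<^sup>2" by (intro power_mono) auto
  then show ?thesis by (simp add: power_mult_distrib)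
qed

lemma good_v_est:
  fixes S :: "'x::euclidean_space \<Rightarrow> 'z::euclidean_space"
  assumes der: "(S has_derivative A) (at xb)" and lipS: "LS-lipschitz_on UNIV S"
    and sub: "\<And>z. g z \<ge> g (S xb) + inner w (z - S xb) - eta/2 * (norm (z - S xb))\<^sup>2"
    and rep: "\<And>h. inner v h = inner w (A h)" and eta: "eta \<ge> 0"
    and e: "eps > 0"
  shows "\<exists>d>0. \<forall>x. norm (x - xb) < d \<longrightarrow> g (S x) \<ge> g (S xb) + inner v (x - xb) - eps * norm (x - xb)"
proof -
  define e2 where "e2 = eps / (2 * (norm w + 1))"
  have "0 < 2*(norm w + 1)" by (smt (verit) norm_ge_zero)
  then have e2: "e2 > 0" unfolding e2_def by (rule divide_pos_pos[OF e])
  obtain d2 where d2: "d2 > 0" and d2h: "\<And>y. norm (y - xb) < d2 \<Longrightarrow> norm (S y - S xb - A (y - xb)) \<le> e2 * norm (y - xb)"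
    using der e2 unfolding has_derivative_at_alt by blast
  define K where "K = eta/2 * LS\<^sup>2"
  have K0: "K \<ge> 0" using eta by (simp add: K_def)
  define d where "d = min d2 (eps / (2 * K + 1))"
  have d: "d > 0" using d2 e K0 by (simp add: d_def)
  show ?thesis
  proof (intro exI[of _ d] conjI allI impI d)
    fix x assume xd: "norm (x - xb) < d"
    define n where "n = norm (x - xb)"
    have n0: "n \<ge> 0" by (simp add: n_def)
    have 1: "norm (S x - S xb - A (x - xb)) \<le> e2 * n" using d2h xd by (simp add: d_def n_def)
    have "\<bar>inner w (S x - S xb - A (x - xb))\<bar> \<le> norm w * (e2 * n)"
      using Cauchy_Schwarz_ineq2 1 by (meson mult_left_mono norm_ge_zero order_trans)
    moreover have "norm w * (e2 * n) \<le> eps/2 * n"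
    proof -
      have q: "norm w / (norm w + 1) \<le> 1" by (smt (verit) divide_le_eq_1 norm_ge_zero)
      have "norm w * e2 = (eps/2) * (norm w / (norm w + 1))"
        unfolding e2_def by (simp add: field_simps)
      also have "\<dots> \<le> eps/2" using mult_left_mono[OF q, of "eps/2"] e by simp
      finally have "norm w * e2 \<le> eps/2" .
      then show ?thesis using n0 by (metis mult.assoc mult_right_mono)
    qed
    moreover have "inner w (S x - S xb) = inner v (x - xb) + inner w (S x - S xb - A (x - xb))"
      using rep[of "x - xb"] by (simp add: inner_diff_right)
    ultimately have 2: "inner w (S x - S xb) \<ge> inner v (x - xb) - eps/2 * n" by linarith
    have 3: "eta/2 * (norm (S x - S xb))\<^sup>2 \<le> K * n\<^sup>2"
    proof -
      have "eta/2 * (norm (S x - S xb))\<^sup>2 \<le> eta/2 * (LS\<^sup>2 * (norm (x - xb))\<^sup>2)"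
        using sq_le_lip[OF lipS, of x xb] eta by (intro mult_left_mono) auto
      then show ?thesis unfolding K_def n_def by (simp add: mult.assoc)
    qed
    have "K * n \<le> eps/2"
    proof -
      have "n \<le> eps / (2*K+1)" using xd by (simp add: d_def n_def)
      then have "K * n \<le> K * (eps / (2*K+1))" by (rule mult_left_mono[OF _ K0])
      also have "\<dots> \<le> eps/2" using K0 e by (simp add: field_simps)
      finally show ?thesis .
    qed
    then have 4: "K * n\<^sup>2 \<le> eps/2 * n" using n0 by (metis mult.assoc mult_right_mono power2_eq_square mult.commute)
    have "g (S x) \<ge> g (S xb) + inner w (S x - S xb) - eta/2 * (norm (S x - S xb))\<^sup>2" by (rule sub)
    then show "g (S x) \<ge> g (S xb) + inner v (x - xb) - eps * norm (x - xb)"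
      using 2 3 4 by (simp add: n_def[symmetric])
  qed
qed

lemma in_subdiff_sum:
  fixes F :: "'x::euclidean_space \<Rightarrow> real"
  assumes est: "\<And>eps. eps > 0 \<Longrightarrow> \<exists>d>0. \<forall>x. norm (x - xb) < d \<longrightarrow> F x \<ge> F xb + inner v (x - xb) - eps * norm (x - xb)"
    and nrm: "\<And>q. q \<in> C \<Longrightarrow> inner z (q - xb) \<le> K * (norm (q - xb))\<^sup>2" and K: "K \<ge> 0"
    and xb: "xb \<in> C"
  shows "v + z \<in> frechet_subdiff (\<lambda>y. ereal (F y) + iota C y) xb"
proof -
  have Jxb: "ereal (F xb) + iota C xb = ereal (F xb)" using xb by (simp add: iota_def)
  have nm: "ereal (F x) + iota C x \<noteq> -\<infinity>" for x by (simp add: iota_def)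
  show ?thesis
    unfolding fs_char[where J="\<lambda>y. ereal (F y) + iota C y", OF Jxb nm]
  proof (intro allI impI)
    fix eps :: real assume e: "eps > 0"
    obtain d1 where d1: "d1 > 0" and d1h: "\<And>x. norm (x - xb) < d1 \<Longrightarrow> F x \<ge> F xb + inner v (x - xb) - eps/2 * norm (x - xb)"
      using est[of "eps/2"] e by auto
    define d where "d = min d1 (eps / (2 * K + 1))"
    have d: "d > 0" using d1 e K by (simp add: d_def)
    have "ereal (F x) + iota C x \<ge> ereal (F xb + inner (v + z) (x - xb) - eps * norm (x - xb))"
      if x: "0 < norm (x - xb)" "norm (x - xb) < d" for x
    proof (cases "x \<in> C")
      case False then show ?thesis by (simp add: iota_def)
    next
      case True
      define n where "n = norm (x - xb)"
      have n0: "n \<ge> 0" by (simp add: n_def)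
      have a: "F x \<ge> F xb + inner v (x - xb) - eps/2 * n" using d1h x by (simp add: d_def n_def)
      have b: "inner z (x - xb) \<le> K * n\<^sup>2" using nrm[OF True] by (simp add: n_def)
      have "K * n \<le> eps/2"
      proof -
        have "n \<le> eps / (2*K+1)" using x by (simp add: d_def n_def)
        then have "K * n \<le> K * (eps / (2*K+1))" by (rule mult_left_mono[OF _ K])
        also have "\<dots> \<le> eps/2" using K e by (simp add: field_simps)
        finally show ?thesis .
      qed
      then have c: "K * n\<^sup>2 \<le> eps/2 * n" using n0 by (metis mult.assoc mult_right_mono power2_eq_square mult.commute)
      have "F x \<ge> F xb + inner (v + z) (x - xb) - eps * n"
        using a b c by (simp add: inner_add_left)
      then show ?thesis using True by (simp add: iota_def n_def)
    qed
    then show "\<exists>d>0. \<forall>x. 0 < norm (x - xb) \<and> norm (x - xb) < d \<longrightarrow>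
      ereal (F xb + inner (v + z) (x - xb) - eps * norm (x - xb)) \<le> ereal (F x) + iota C x"
      using d by blast
  qed
qed


lemma frac_le1: "(a::real) \<ge> 0 \<Longrightarrow> a / (a + 1) \<le> 1"
  by (smt (verit) divide_le_eq_1)

lemma aux_frac: "(b::real) > 0 \<Longrightarrow> W > 0 \<Longrightarrow> x * (e/(3*b*W)) * b = e/3 * (x/W)"
  by (simp add: field_simps)

lemma subgrad_upper:
  fixes S :: "'x::euclidean_space \<Rightarrow> 'z::euclidean_space" and F :: "'x \<Rightarrow> real"
  assumes der: "(S has_derivative A) (at x)" and lipS: "LS-lipschitz_on UNIV S"
    and up: "\<And>y. F y \<le> F x + inner w (S y - S x) + c * (norm (S y - S x))\<^sup>2" and c: "c \<ge> 0"
    and v: "v \<in> frechet_subdiff (\<lambda>y. ereal (F y)) x"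
  shows "inner v h = inner w (A h)"
proof -
  have bl: "bounded_linear A" using der by (rule has_derivative_bounded_linear)
  then have lin: "linear A" by (rule bounded_linear.linear)
  have vest: "\<forall>eps>0. \<exists>d>0. \<forall>y. 0 < norm (y - x) \<and> norm (y - x) < d \<longrightarrow>
        ereal (F x + inner v (y - x) - eps * norm (y - x)) \<le> ereal (F y)"
    using v fs_char[of "\<lambda>y. ereal (F y)" x "F x" v] by simp
  have LS: "LS \<ge> 0" using lipS by (simp add: lipschitz_on_def)
  have le: "inner v h \<le> inner w (A h)" for h
  proof (cases "h = 0")
    case True then show ?thesis using linear_0[OF lin] by simp
  next
    case False
    define nh where "nh = norm h"
    have nh: "nh > 0" using False by (simp add: nh_def)
    show ?thesis
    proof (rule field_le_epsilon)
      fix eps :: real assume e: "eps > 0"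
      define e1 where "e1 = eps / (3 * nh)"
      have e1: "e1 > 0" using e nh by (simp add: e1_def)
      obtain d1 where d1: "d1 > 0" and d1h: "\<And>y. 0 < norm (y - x) \<Longrightarrow> norm (y - x) < d1 \<Longrightarrow>
          F x + inner v (y - x) - e1 * norm (y - x) \<le> F y"
        using vest e1 by force
      define e2 where "e2 = eps / (3 * nh * (norm w + 1))"
      have "0 < 3 * nh * (norm w + 1)" using nh by (smt (verit) norm_ge_zero mult_pos_pos)
      then have e2: "e2 > 0" unfolding e2_def by (rule divide_pos_pos[OF e])
      obtain d2 where d2: "d2 > 0" and d2h: "\<And>y. norm (y - x) < d2 \<Longrightarrow> norm (S y - S x - A (y - x)) \<le> e2 * norm (y - x)"
        using der e2 unfolding has_derivative_at_alt by blast
      define M where "M = c * LS\<^sup>2 * nh\<^sup>2"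
      have M0: "M \<ge> 0" using c by (simp add: M_def)
      define t where "t = min (min d1 d2 / (2 * nh)) (eps / (3 * (M + 1)))"
      have t0: "t > 0" using d1 d2 nh e M0 by (simp add: t_def)
      have tnh: "t * nh < min d1 d2"
      proof -
        have "t \<le> min d1 d2 / (2 * nh)" by (simp add: t_def)
        then have "t * nh \<le> min d1 d2 / (2 * nh) * nh" using nh by (intro mult_right_mono) auto
        also have "\<dots> = min d1 d2 / 2" using nh by (simp add: field_simps)
        also have "\<dots> < min d1 d2" using d1 d2 by (simp add: min_def)
        finally show ?thesis .
      qed
      have tM: "t * M \<le> eps / 3"
      proof -
        have "t \<le> eps / (3 * (M + 1))" by (simp add: t_def)
        then have "t * M \<le> eps / (3 * (M + 1)) * M" using M0 by (intro mult_right_mono) auto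
        also have "\<dots> = eps/3 * (M / (M + 1))" by (simp add: field_simps)
        also have "\<dots> \<le> eps/3" using mult_left_mono[OF frac_le1[OF M0], of "eps/3"] e by simp
        finally show ?thesis .
      qed
      define y where "y = x + t *\<^sub>R h"
      have ny: "norm (y - x) = t * nh" using t0 by (simp add: y_def nh_def)
      have i: "F x + t * inner v h - e1 * (t * nh) \<le> F y"
        using d1h[of y] ny tnh t0 nh by (simp add: y_def)
      have ii: "F y \<le> F x + inner w (S y - S x) + c * (norm (S y - S x))\<^sup>2" by (rule up)
      have Ath: "A (y - x) = t *\<^sub>R A h" by (simp add: y_def linear_cmul[OF lin])
      have iii: "inner w (S y - S x) \<le> t * inner w (A h) + norm w * (e2 * (t * nh))"
      proof -
        have "norm (S y - S x - A (y - x)) \<le> e2 * (t * nh)" using d2h[of y] ny tnh by simp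
        then have "\<bar>inner w (S y - S x - A (y - x))\<bar> \<le> norm w * (e2 * (t * nh))"
          using Cauchy_Schwarz_ineq2 by (meson mult_left_mono norm_ge_zero order_trans)
        moreover have "inner w (S y - S x) = t * inner w (A h) + inner w (S y - S x - A (y - x))"
          unfolding Ath by (simp add: inner_diff_right)
        ultimately show ?thesis by linarith
      qed
      have iv: "c * (norm (S y - S x))\<^sup>2 \<le> t * (t * M)"
      proof -
        have "c * (norm (S y - S x))\<^sup>2 \<le> c * (LS\<^sup>2 * (norm (y - x))\<^sup>2)"
          using sq_le_lip[OF lipS, of y x] c by (intro mult_left_mono) auto
        then show ?thesis unfolding ny M_def by (simp add: power_mult_distrib algebra_simps power2_eq_square)
      qed
      have A1: "e1 * nh = eps / 3" using nh by (simp add: e1_def field_simps)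
      have A2: "norm w * e2 * nh \<le> eps / 3"
      proof -
        have wp: "norm w + 1 > 0" by (smt (verit) norm_ge_zero)
        have "norm w * e2 * nh = eps/3 * (norm w / (norm w + 1))" unfolding e2_def by (rule aux_frac[OF nh wp])
        also have "\<dots> \<le> eps/3" using mult_left_mono[OF frac_le1[OF norm_ge_zero[of w]], of "eps/3"] e by simp
        finally show ?thesis .
      qed
      have "t * inner v h \<le> t * inner w (A h) + t * (e1 * nh + norm w * e2 * nh + t * M)"
        using i ii iii iv by (simp add: algebra_simps)
      also have "\<dots> \<le> t * inner w (A h) + t * eps"
        using A1 A2 tM t0 by (intro add_left_mono mult_left_mono) auto
      finally have "t * inner v h \<le> t * (inner w (A h) + eps)" by (simp add: algebra_simps)
      then show "inner v h \<le> inner w (A h) + eps" using t0 by simp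
    qed
  qed
  have "inner v (-h) \<le> inner w (A (-h))" by (rule le)
  then have "inner v h \<ge> inner w (A h)" using linear_neg[OF lin] by simp
  then show ?thesis using le[of h] by simp
qed


lemma freq_subseq:
  assumes "frequently P sequentially"
  shows "\<exists>r::nat\<Rightarrow>nat. strict_mono r \<and> (\<forall>n. P (r n))"
proof -
  have "\<forall>N. \<exists>n\<ge>N. P n" using assms[unfolded frequently_sequentially] .
  then have "infinite {n. P n}"
    unfolding infinite_nat_iff_unbounded_le by simp
  then have "\<exists>r::nat\<Rightarrow>nat. strict_mono r \<and> (\<forall>n. r n \<in> {n. P n})" by (rule infinite_enumerate)
  then show ?thesis by simp
qed

lemma proj_self: "p \<in> C \<Longrightarrow> p \<in> proj C p"
  by (simp add: proj_def)

lemma proj_subseg: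
  assumes p: "p \<in> proj C y" and l: "0 \<le> l" "l \<le> 1"
  shows "p \<in> proj C (p + l *\<^sub>R (y - p))"
proof -
  have pC: "p \<in> C" and pm: "\<And>q. q \<in> C \<Longrightarrow> norm (y - p) \<le> norm (y - q)" using p by (auto simp: proj_def)
  have "norm (p + l *\<^sub>R (y - p) - p) \<le> norm (p + l *\<^sub>R (y - p) - q)" if q: "q \<in> C" for q
  proof -
    have e1: "y - (p + l *\<^sub>R (y - p)) = (1 - l) *\<^sub>R (y - p)" by (simp add: algebra_simps)
    have "norm (y - q) \<le> norm (y - (p + l *\<^sub>R (y - p))) + norm (p + l *\<^sub>R (y - p) - q)"
      by (metis diff_add_cancel norm_triangle_ineq add_diff_eq)
    also have "norm (y - (p + l *\<^sub>R (y - p))) = (1 - l) * norm (y - p)" unfolding e1 using l by simp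
    finally have "norm (y - q) - (1 - l) * norm (y - p) \<le> norm (p + l *\<^sub>R (y - p) - q)" by simp
    moreover have "norm (y - p) \<le> norm (y - q)" by (rule pm[OF q])
    moreover have "norm (p + l *\<^sub>R (y - p) - p) = l * norm (y - p)" using l by simp
    ultimately show ?thesis by (simp add: algebra_simps)
  qed
  then show ?thesis using pC by (simp add: proj_def)
qed

lemma proj_limit:
  fixes ys ps :: "nat \<Rightarrow> 'a::real_normed_vector"
  assumes C: "closed C" and pr: "\<And>n. ps n \<in> proj C (ys n)" and ly: "ys \<longlonglongrightarrow> y" and lp: "ps \<longlonglongrightarrow> p"
  shows "p \<in> proj C y"
proof -
  have pC: "p \<in> C"
    using C lp pr unfolding closed_sequential_limits proj_def by blast
  have "norm (y - p) \<le> norm (y - q)" if q: "q \<in> C" for q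
  proof (rule tendsto_le[OF sequentially_bot])
    show "(\<lambda>n. norm (ys n - q)) \<longlonglongrightarrow> norm (y - q)" by (intro tendsto_intros ly)
    show "(\<lambda>n. norm (ys n - ps n)) \<longlonglongrightarrow> norm (y - p)" by (intro tendsto_intros ly lp)
    show "\<forall>\<^sub>F n in sequentially. norm (ys n - ps n) \<le> norm (ys n - q)"
      using pr q by (auto simp: proj_def)
  qed
  then show ?thesis using pC by (simp add: proj_def)
qed

lemma proj_fun:
  assumes uniq: "\<forall>y\<in>U. \<exists>!p. p \<in> proj C y" and y: "y \<in> U"
  shows "(THE p. p \<in> proj C y) \<in> proj C y"
  using theI'[of "\<lambda>p. p \<in> proj C y"] uniq y by blast

lemma proj_cont:
  fixes C :: "'a::euclidean_space set"
  assumes C: "closed C" and uniq: "\<forall>y\<in>U. \<exists>!p. p \<in> proj C y"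
  shows "continuous_on U (\<lambda>y. THE p. p \<in> proj C y)"
  unfolding continuous_on_sequentially
proof (intro allI ballI impI, elim conjE)
  define Pf where "Pf y = (THE p. p \<in> proj C y)" for y
  have Pf: "y \<in> U \<Longrightarrow> Pf y \<in> proj C y" for y unfolding Pf_def by (rule proj_fun[OF uniq])
  have Pu: "y \<in> U \<Longrightarrow> p \<in> proj C y \<Longrightarrow> p = Pf y" for y p using uniq Pf by blast
  fix xs a assume a: "a \<in> U" and xs: "\<forall>n. xs n \<in> U" and lim: "xs \<longlonglongrightarrow> a"
  show "((\<lambda>y. THE p. p \<in> proj C y) \<circ> xs) \<longlonglongrightarrow> (THE p. p \<in> proj C a)"
    unfolding Pf_def[symmetric] o_def
  proof (rule ccontr)
    assume nc: "\<not> (\<lambda>n. Pf (xs n)) \<longlonglongrightarrow> Pf a"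
    then obtain eps where e: "eps > 0" and fr: "\<not> (\<forall>\<^sub>F n in sequentially. dist (Pf (xs n)) (Pf a) < eps)"
      unfolding tendsto_iff by blast
    then have "frequently (\<lambda>n. \<not> dist (Pf (xs n)) (Pf a) < eps) sequentially"
      by (simp add: not_eventually)
    then have "\<exists>r::nat\<Rightarrow>nat. strict_mono r \<and> (\<forall>n. \<not> dist (Pf (xs (r n))) (Pf a) < eps)"
      by (rule freq_subseq)
    then obtain r :: "nat \<Rightarrow> nat" where r: "strict_mono r" and rr0: "\<forall>n. \<not> dist (Pf (xs (r n))) (Pf a) < eps"
      by blast
    have rr: "dist (Pf (xs (r n))) (Pf a) \<ge> eps" for n using rr0 by (simp add: not_less)
    have bx: "bounded (range xs)" using lim by (rule convergent_imp_bounded)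
    then obtain B where B: "\<And>n. norm (xs n) \<le> B" by (auto simp: bounded_iff)
    have pa: "Pf a \<in> C" using Pf[OF a] by (simp add: proj_def)
    have "norm (Pf (xs n)) \<le> 2 * B + norm (Pf a)" for n
    proof -
      have "norm (xs n - Pf (xs n)) \<le> norm (xs n - Pf a)" using Pf[OF xs[rule_format, of n]] pa by (simp add: proj_def)
      also have "\<dots> \<le> B + norm (Pf a)" using B[of n] norm_triangle_ineq4 by (smt (verit))
      finally show ?thesis using B[of n] norm_triangle_ineq3[of "Pf (xs n)" "xs n"]
        by (smt (verit) norm_minus_commute norm_triangle_ineq2)
    qed
    then have "bounded (range (\<lambda>n. Pf (xs (r n))))" by (auto simp: bounded_iff)
    then obtain l s where s: "strict_mono s" and ls: "((\<lambda>n. Pf (xs (r n))) \<circ> s) \<longlonglongrightarrow> l"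
      using bounded_imp_convergent_subsequence by blast
    have lx: "(\<lambda>n. xs (r (s n))) \<longlonglongrightarrow> a"
      using LIMSEQ_subseq_LIMSEQ[OF LIMSEQ_subseq_LIMSEQ[OF lim r] s] by (simp add: o_def)
    have "l \<in> proj C a"
      by (rule proj_limit[OF C _ lx]) (use ls Pf xs in \<open>auto simp: o_def\<close>)
    then have "l = Pf a" using Pu[OF a] by blast
    moreover have "dist l (Pf a) \<ge> eps"
    proof (rule tendsto_le[OF sequentially_bot])
      show "(\<lambda>n. dist (Pf (xs (r (s n)))) (Pf a)) \<longlonglongrightarrow> dist l (Pf a)"
        using ls by (intro tendsto_intros) (simp add: o_def)
      show "(\<lambda>n. eps) \<longlonglongrightarrow> eps" by simp
      show "\<forall>\<^sub>F n in sequentially. eps \<le> dist (Pf (xs (r (s n)))) (Pf a)" using rr by simp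
    qed
    ultimately show False using e by simp
  qed
qed


lemma ext_step:
  fixes C :: "'a::euclidean_space set"
  assumes C: "closed C" and U: "open U" and uniq: "\<forall>y\<in>U. \<exists>!p. p \<in> proj C y"
    and pC: "p \<in> C" and e: "norm e = 1" and T: "T > 0" and yU: "p + T *\<^sub>R e \<in> U"
    and pT: "p \<in> proj C (p + T *\<^sub>R e)"
  shows "\<exists>d>0. p \<in> proj C (p + (T + d) *\<^sub>R e)"
proof -
  define Pf where "Pf y = (THE p. p \<in> proj C y)" for y
  have Pf: "y \<in> U \<Longrightarrow> Pf y \<in> proj C y" for y unfolding Pf_def by (rule proj_fun[OF uniq])
  have Pu: "y \<in> U \<Longrightarrow> q \<in> proj C y \<Longrightarrow> q = Pf y" for y q using uniq Pf by blast
  have cont: "continuous_on U Pf" unfolding Pf_def by (rule proj_cont[OF C uniq])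
  define yT where "yT = p + T *\<^sub>R e"
  obtain r where r: "r > 0" and rU: "cball yT (2*r) \<subseteq> U"
  proof -
    obtain r0 where "r0 > 0" "cball yT r0 \<subseteq> U" using open_contains_cball U yU yT_def by blast
    then show ?thesis using that[of "r0/2"] by simp
  qed
  define d where "d = min r (T * r / (5 * r + 2 * T))"
  have d0: "d > 0" using r T by (simp add: d_def)
  have dr: "d \<le> r" by (simp add: d_def)
  have dk: "d * (5 * r + 2 * T) \<le> T * r"
  proof -
    have "d \<le> T * r / (5 * r + 2 * T)" by (simp add: d_def)
    then have "d * (5 * r + 2 * T) \<le> T * r / (5 * r + 2 * T) * (5 * r + 2 * T)"
      using r T by (intro mult_right_mono) auto
    also have "\<dots> = T * r" using r T by simp
    finally show ?thesis .
  qed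
  define s where "s = T + d"
  have s0: "s > 0" "s > T" using T d0 by (auto simp: s_def)
  define lam where "lam = T / s"
  have lam: "0 < lam" "lam < 1" using T s0 by (auto simp: lam_def)
  have oml: "(1 - lam) * s = d" using s0 by (simp add: lam_def s_def field_simps)
  define ys where "ys = p + s *\<^sub>R e"
  have ysyT: "norm (ys - yT) = d" using e d0 by (simp add: ys_def yT_def s_def algebra_simps)
  have DU: "cball ys r \<subseteq> U"
  proof
    fix y assume "y \<in> cball ys r"
    then have "norm (y - ys) \<le> r" by (simp add: dist_norm norm_minus_commute)
    then have "norm (y - yT) \<le> 2 * r" using ysyT dr norm_triangle_ineq[of "y - ys" "ys - yT"] by simp
    then show "y \<in> U" using rU by (simp add: dist_norm norm_minus_commute subset_iff)
  qed
  define Th where "Th y = (1 - lam) *\<^sub>R (y - Pf y) + yT" for y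
  have cTh: "continuous_on (cball ys r) Th"
    unfolding Th_def by (intro continuous_intros continuous_on_subset[OF cont DU])
  have mapsto: "Th y \<in> cball ys r" if y: "y \<in> cball ys r" for y
  proof -
    have yU': "y \<in> U" using DU y by auto
    have ny: "norm (y - ys) \<le> r" using y by (simp add: dist_norm norm_minus_commute)
    have pfy: "norm (y - Pf y) \<le> norm (y - p)" using Pf[OF yU'] pC by (simp add: proj_def)
    have nyp: "norm (y - p) \<le> r + s"
    proof -
      have "norm (y - p) \<le> norm (y - ys) + norm (ys - p)" using norm_triangle_ineq[of "y - ys" "ys - p"] by simp
      also have "norm (ys - p) = s" using e s0 by (simp add: ys_def)
      finally show ?thesis using ny by simp
    qed
    have npp: "norm (p - Pf y) \<le> 2 * (r + s)"
    proof -
      have "norm (p - Pf y) \<le> norm (p - y) + norm (y - Pf y)" using norm_triangle_ineq[of "p - y" "y - Pf y"] by simp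
      then show ?thesis using pfy nyp by (simp add: norm_minus_commute)
    qed
    have eq: "Th y - ys = (1 - lam) *\<^sub>R ((y - ys) + (p - Pf y))"
    proof -
      have "yT - ys = - ((1 - lam) * s) *\<^sub>R e" unfolding oml by (simp add: yT_def ys_def s_def algebra_simps)
      then have "Th y - ys = (1 - lam) *\<^sub>R (y - Pf y) - ((1 - lam) * s) *\<^sub>R e"
        by (simp add: Th_def algebra_simps)
      also have "\<dots> = (1 - lam) *\<^sub>R ((y - ys) + (p - Pf y))"
        by (simp add: ys_def algebra_simps)
      finally show ?thesis .
    qed
    have "norm (Th y - ys) = (1 - lam) * norm ((y - ys) + (p - Pf y))" unfolding eq using lam by simp
    also have "\<dots> \<le> (1 - lam) * (r + 2 * (r + s))"
      using lam ny npp norm_triangle_ineq[of "y - ys" "p - Pf y"] by (intro mult_left_mono) auto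
    also have "\<dots> = d / s * (3 * r + 2 * s)"
    proof -
      have "1 - lam = d / s" using oml s0 by (simp add: field_simps)
      then show ?thesis by simp
    qed
    also have "\<dots> \<le> r"
    proof -
      have "d * (3 * r + 2 * s) \<le> d * (5 * r + 2 * T)" using d0 dr by (simp add: s_def)
      also have "\<dots> \<le> T * r" by (rule dk)
      also have "\<dots> \<le> s * r" using s0 r by simp
      finally have "d * (3 * r + 2 * s) \<le> s * r" .
      then show ?thesis using s0 by (simp add: field_simps)
    qed
    finally show ?thesis by (simp add: dist_norm norm_minus_commute)
  qed
  obtain ystar where ysD: "ystar \<in> cball ys r" and fx: "Th ystar = ystar"
    using brouwer_ball[OF r cTh] mapsto by blast
  define c where "c = Pf ystar"
  have ysU: "ystar \<in> U" using DU ysD by auto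
  have cpr: "c \<in> proj C ystar" using Pf[OF ysU] by (simp add: c_def)
  have yTeq: "yT = c + lam *\<^sub>R (ystar - c)"
  proof -
    have "(1 - lam) *\<^sub>R (ystar - c) + yT = ystar" using fx by (simp add: Th_def c_def)
    then show ?thesis by (simp add: algebra_simps)
  qed
  have "c \<in> proj C (c + lam *\<^sub>R (ystar - c))" by (rule proj_subseg[OF cpr]) (use lam in auto)
  then have "c \<in> proj C yT" using yTeq by simp
  moreover have "p \<in> proj C yT" using pT by (simp add: yT_def)
  ultimately have cp: "c = p" using uniq yU unfolding yT_def by blast
  have "lam *\<^sub>R (ystar - p) = T *\<^sub>R e" using yTeq cp by (simp add: yT_def)
  then have "ystar - p = (T / lam) *\<^sub>R e" using lam
    by (metis (no_types, lifting) divide_inverse_commute inverse_eq_divide order_less_irrefl scaleR_scaleR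
        divideR_right inverse_1 mult.left_neutral scaleR_one divide_self_if)
  moreover have "T / lam = s" using T s0 by (simp add: lam_def)
  ultimately have "ystar = ys" by (simp add: ys_def algebra_simps)
  then have "p \<in> proj C ys" using cpr cp by (simp add: c_def)
  then show ?thesis using d0 by (auto simp: ys_def s_def)
qed


lemma ext_ray:
  fixes C :: "'a::euclidean_space set"
  assumes C: "closed C" and U: "open U" and uniq: "\<forall>y\<in>U. \<exists>!p. p \<in> proj C y"
    and pC: "p \<in> C" and e: "norm e = 1" and S0: "S0 > 0" and seg: "\<And>t. 0 \<le> t \<Longrightarrow> t \<le> S0 \<Longrightarrow> p + t *\<^sub>R e \<in> U"
    and t0: "t0 > 0" and pt0: "p \<in> proj C (p + t0 *\<^sub>R e)"
  shows "p \<in> proj C (p + S0 *\<^sub>R e)"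
proof -
  define I where "I = {t \<in> {0..S0}. p \<in> proj C (p + t *\<^sub>R e)}"
  have down: "s \<in> I" if t: "t \<in> I" and s: "0 \<le> s" "s \<le> t" for s t
  proof (cases "t = 0")
    case True
    then have "s = 0" using s by simp
    then show ?thesis using pC S0 by (simp add: I_def proj_self)
  next
    case False
    then have tp: "t > 0" using t by (simp add: I_def)
    have "p \<in> proj C (p + (s/t) *\<^sub>R ((p + t *\<^sub>R e) - p))"
      by (rule proj_subseg) (use t s tp in \<open>auto simp: I_def\<close>)
    then show ?thesis using t s tp by (auto simp: I_def)
  qed
  have clI: "closed I"
  proof -
    have "I = {0..S0} \<inter> (\<Inter>q\<in>C. {t. norm (p + t *\<^sub>R e - p) \<le> norm (p + t *\<^sub>R e - q)})"
      using pC by (auto simp: I_def proj_def)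
    moreover have "closed {t::real. norm (p + t *\<^sub>R e - p) \<le> norm (p + t *\<^sub>R e - q)}" for q
      by (intro closed_Collect_le continuous_intros)
    ultimately show ?thesis by (auto intro!: closed_Int closed_INT)
  qed
  define m0 where "m0 = min t0 S0"
  have m0I: "m0 \<in> I"
  proof -
    have "p \<in> proj C (p + (m0/t0) *\<^sub>R ((p + t0 *\<^sub>R e) - p))"
      by (rule proj_subseg[OF pt0]) (use t0 S0 in \<open>auto simp: m0_def\<close>)
    then show ?thesis using t0 S0 by (auto simp: I_def m0_def)
  qed
  have bdd: "bdd_above I" by (auto simp: I_def bdd_above_def)
  have ne: "I \<noteq> {}" using m0I by auto
  define T where "T = Sup I"
  have TI: "T \<in> I" unfolding T_def by (rule closed_contains_Sup[OF ne bdd clI])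
  have Tpos: "T > 0"
  proof -
    have "m0 \<le> T" unfolding T_def by (rule cSup_upper[OF m0I bdd])
    moreover have "m0 > 0" using t0 S0 by (simp add: m0_def)
    ultimately show ?thesis by simp
  qed
  have TS: "T \<le> S0" using TI by (simp add: I_def)
  have "T = S0"
  proof (rule ccontr)
    assume "T \<noteq> S0"
    then have lt: "T < S0" using TS by simp
    have yU: "p + T *\<^sub>R e \<in> U" using seg Tpos TS by simp
    have pT: "p \<in> proj C (p + T *\<^sub>R e)" using TI by (simp add: I_def)
    obtain d where d: "d > 0" and pd: "p \<in> proj C (p + (T + d) *\<^sub>R e)"
      using ext_step[OF C U uniq pC e Tpos yU pT] by blast
    define s where "s = min (T + d) S0"
    have "p \<in> proj C (p + (s/(T+d)) *\<^sub>R ((p + (T + d) *\<^sub>R e) - p))"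
      by (rule proj_subseg[OF pd]) (use Tpos d S0 in \<open>auto simp: s_def\<close>)
    then have "s \<in> I" using Tpos d S0 by (auto simp: I_def s_def)
    then have "s \<le> T" unfolding T_def by (rule cSup_upper[OF _ bdd])
    moreover have "s > T" using lt d by (simp add: s_def)
    ultimately show False by simp
  qed
  then show ?thesis using TI by (simp add: I_def)
qed


lemma prox_reg_normal:
  fixes C :: "'a::euclidean_space set"
  assumes C: "closed C" and pr: "prox_regular C" and xb: "xb \<in> C"
  shows "\<exists>rho>0. \<exists>r0>0. \<forall>p\<in>C. norm (p - xb) < rho \<longrightarrow> (\<forall>z t. t > 0 \<longrightarrow> p \<in> proj C (p + t *\<^sub>R z) \<longrightarrow>
           (\<forall>q\<in>C. inner z (q - p) \<le> norm z / (2 * r0) * (norm (q - p))\<^sup>2))"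
proof -
  obtain U where U: "open U" and CU: "C \<subseteq> U" and uniq: "\<forall>y\<in>U. \<exists>!p. p \<in> proj C y"
    using pr unfolding prox_regular_def by blast
  obtain R where R: "R > 0" and RU: "ball xb R \<subseteq> U" using U CU xb open_contains_ball by blast
  define rho where "rho = R / 2"
  define r0 where "r0 = R / 4"
  have rho: "rho > 0" and r0: "r0 > 0" using R by (auto simp: rho_def r0_def)
  have main: "inner z (q - p) \<le> norm z / (2 * r0) * (norm (q - p))\<^sup>2"
    if p: "p \<in> C" "norm (p - xb) < rho" and t: "t > 0" and pp: "p \<in> proj C (p + t *\<^sub>R z)" and q: "q \<in> C"
    for p z t q
  proof (cases "z = 0")
    case True then show ?thesis by simp
  next
    case False
    define nz where "nz = norm z"
    have nz: "nz > 0" using False by (simp add: nz_def)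
    define e where "e = (1 / nz) *\<^sub>R z"
    have e: "norm e = 1" using nz by (simp add: e_def nz_def)
    have ze: "z = nz *\<^sub>R e" using nz by (simp add: e_def)
    have t0: "t * nz > 0" using t nz by simp
    have pt0: "p \<in> proj C (p + (t * nz) *\<^sub>R e)" using pp by (simp add: ze)
    have seg: "p + s *\<^sub>R e \<in> U" if "0 \<le> s" "s \<le> r0" for s
    proof -
      have "norm (p + s *\<^sub>R e - xb) \<le> norm (p - xb) + norm (s *\<^sub>R e)"
        using norm_triangle_ineq[of "p - xb" "s *\<^sub>R e"] by (simp add: algebra_simps)
      also have "\<dots> < R" using p(2) that e by (simp add: rho_def r0_def)
      finally show ?thesis using RU by (auto simp: dist_norm norm_minus_commute)
    qed
    have pr0: "p \<in> proj C (p + r0 *\<^sub>R e)"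
      by (rule ext_ray[OF C U uniq p(1) e r0 seg t0 pt0])
    then have "norm (p + r0 *\<^sub>R e - p) \<le> norm (p + r0 *\<^sub>R e - q)" using q by (simp add: proj_def)
    then have "norm (r0 *\<^sub>R e) \<le> norm ((p - q) + r0 *\<^sub>R e)" by (simp add: algebra_simps)
    then have "(norm (r0 *\<^sub>R e))\<^sup>2 \<le> (norm ((p - q) + r0 *\<^sub>R e))\<^sup>2"
      by (intro power_mono) auto
    then have "r0\<^sup>2 \<le> (norm (p - q))\<^sup>2 + 2 * inner (p - q) (r0 *\<^sub>R e) + r0\<^sup>2"
      unfolding norm_shift using e r0 by simp
    then have "2 * r0 * inner e (q - p) \<le> (norm (q - p))\<^sup>2"
      by (simp add: inner_diff_left inner_diff_right inner_commute norm_minus_commute algebra_simps)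
    then have ie: "inner e (q - p) \<le> (norm (q - p))\<^sup>2 / (2 * r0)" using r0 by (simp add: field_simps)
    have "inner z (q - p) = nz * inner e (q - p)" by (simp add: ze)
    also have "\<dots> \<le> nz * ((norm (q - p))\<^sup>2 / (2 * r0))" using ie nz by (intro mult_left_mono) auto
    also have "\<dots> = norm z / (2 * r0) * (norm (q - p))\<^sup>2" by (simp add: nz_def)
    finally show ?thesis .
  qed
  show ?thesis using rho r0 main by blast
qed


lemma lip_tendsto:
  assumes "L-lipschitz_on UNIV f" and "(X \<longlongrightarrow> a) F"
  shows "((\<lambda>n. f (X n)) \<longlongrightarrow> f a) F"
  using continuous_on_tendsto_compose[OF lipschitz_on_continuous_on[OF assms(1)] assms(2)] by simp

lemma core:
  fixes S :: "'x::euclidean_space \<Rightarrow> 'z::euclidean_space"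
    and DS :: "'x \<Rightarrow> ('x \<Rightarrow>\<^sub>L 'z)"
    and g :: "'z \<Rightarrow> real" and eta :: real and C :: "'x set"
    and x :: "nat \<Rightarrow> 'x" and xb :: 'x
    and gamma :: "nat \<Rightarrow> real" and gb :: real
    and mu :: "nat \<Rightarrow> real" and r :: "nat \<Rightarrow> nat"
    and V P :: "nat \<Rightarrow> 'x" and c :: "nat \<Rightarrow> real"
  assumes S_deriv: "\<And>y. (S has_derivative blinfun_apply (DS y)) (at y)"
    and S_lip: "LS-lipschitz_on UNIV S"
    and DS_lip: "LD-lipschitz_on UNIV DS"
    and g_lip: "Lg-lipschitz_on UNIV g"
    and eta_pos: "eta > 0"
    and g_wc: "weakly_convex eta g"
    and C_closed: "closed C" and C_pr: "prox_regular C"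
    and x_lim: "x \<longlonglongrightarrow> xb" and xb_in: "xb \<in> C"
    and gamma_pos: "\<And>n. gamma n > 0" and gamma_lim: "gamma \<longlonglongrightarrow> gb" and gb_nn: "gb \<ge> 0"
    and mu_pos: "\<And>n. mu n > 0" and mu_le: "\<And>n. mu n \<le> 1 / (2 * eta)"
    and mu_lim: "mu \<longlonglongrightarrow> 0"
    and r: "strict_mono r"
    and V: "\<And>k. V k \<in> frechet_subdiff (\<lambda>y. ereal (moreau (mu (r k)) g (S y))) (x (r k))"
    and P: "\<And>k. P k \<in> proj C (x (r k) - gamma (r k) *\<^sub>R V k)"
    and cb: "\<And>k. norm ((1 / gamma (r k)) *\<^sub>R (x (r k) - P k)) \<le> c k"
    and c: "c \<longlonglongrightarrow> c0"
  shows "\<exists>vb ub. (\<forall>eps>0. \<exists>d>0. \<forall>y. norm (y - xb) < d \<longrightarrow> g (S y) \<ge> g (S xb) + inner vb (y - xb) - eps * norm (y - xb))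
           \<and> norm ub \<le> c0
           \<and> (gb > 0 \<longrightarrow> xb - gb *\<^sub>R ub \<in> proj C (xb - gb *\<^sub>R vb))
           \<and> (gb = 0 \<longrightarrow> ub \<in> frechet_subdiff (\<lambda>y. ereal (g (S y)) + iota C y) xb)"
proof -
  define z where "z k = S (x (r k))" for k
  define p where "p k = prox (mu (r k)) g (z k)" for k
  define w where "w k = (1 / mu (r k)) *\<^sub>R (z k - p k)" for k
  define u where "u k = (1 / gamma (r k)) *\<^sub>R (x (r k) - P k)" for k
  note pa = g_lip g_wc eta_pos
  have Lg0: "Lg \<ge> 0" using g_lip by (simp add: lipschitz_on_def)
  have pnear: "norm (p k - z k) \<le> 2 * mu (r k) * Lg" for k
    unfolding p_def by (rule prox_near[OF pa mu_pos mu_le])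
  have wb: "norm (w k) \<le> 2 * Lg" for k
  proof -
    have "norm (w k) = norm (z k - p k) / mu (r k)" using mu_pos[of "r k"] by (simp add: w_def)
    also have "\<dots> \<le> 2 * mu (r k) * Lg / mu (r k)" using pnear[of k] mu_pos[of "r k"]
      by (intro divide_right_mono) (auto simp: norm_minus_commute)
    also have "\<dots> = 2 * Lg" using mu_pos[of "r k"] by simp
    finally show ?thesis .
  qed
  have sub: "g z' \<ge> g (p k) + inner (w k) (z' - p k) - eta/2 * (norm (z' - p k))\<^sup>2" for k z'
    unfolding w_def p_def by (rule prox_sub[OF pa mu_pos mu_le])
  have rep: "inner (V k) h = inner (w k) (blinfun_apply (DS (x (r k))) h)" for k h
  proof (rule subgrad_upper[OF S_deriv S_lip _ _ V])
    show "moreau (mu (r k)) g (S y) \<le> moreau (mu (r k)) g (S (x (r k))) + inner (w k) (S y - S (x (r k)))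
        + 1 / (2 * mu (r k)) * (norm (S y - S (x (r k))))\<^sup>2" for y
      using moreau_up[OF pa mu_pos[of "r k"] mu_le[of "r k"], where zb="S (x (r k))" and z'="S y"]
      by (simp add: w_def p_def z_def)
    show "0 \<le> 1 / (2 * mu (r k))" using mu_pos[of "r k"] by simp
  qed
  obtain Bx where Bx: "\<And>n. norm (x n) \<le> Bx"
    using convergent_imp_bounded[OF x_lim] by (auto simp: bounded_iff)
  have LD0: "LD \<ge> 0" using DS_lip by (simp add: lipschitz_on_def)
  define BD where "BD = norm (DS xb) + LD * (Bx + norm xb)"
  have BD: "norm (DS (x n)) \<le> BD" for n
  proof -
    have "norm (DS (x n) - DS xb) \<le> LD * norm (x n - xb)" by (rule lipD[OF DS_lip])
    also have "\<dots> \<le> LD * (Bx + norm xb)" using Bx[of n] LD0 norm_triangle_ineq4[of "x n" xb]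
      by (intro mult_left_mono) auto
    finally show ?thesis unfolding BD_def using norm_triangle_ineq2[of "DS (x n)" "DS xb"] by simp
  qed
  have BD0: "0 \<le> BD" using BD[of 0] norm_ge_zero[of "DS (x 0)"] by linarith
  have Vb: "norm (V k) \<le> 2 * Lg * BD" for k
  proof -
    have "(norm (V k))\<^sup>2 = inner (V k) (V k)" by (simp add: power2_norm_eq_inner)
    also have "\<dots> = inner (w k) (blinfun_apply (DS (x (r k))) (V k))" by (rule rep)
    also have "\<dots> \<le> norm (w k) * norm (blinfun_apply (DS (x (r k))) (V k))" by (rule norm_cauchy_schwarz)
    also have "\<dots> \<le> norm (w k) * (norm (DS (x (r k))) * norm (V k))"
      by (intro mult_left_mono norm_blinfun) auto
    also have "\<dots> \<le> (2 * Lg) * (BD * norm (V k))"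
    proof -
      have "0 \<le> BD" using BD[of "r k"] norm_ge_zero[of "DS (x (r k))"] by linarith
      then show ?thesis using wb[of k] BD[of "r k"] Lg0 by (intro mult_mono mult_right_mono) auto
    qed
    finally have "norm (V k) * norm (V k) \<le> (2 * Lg * BD) * norm (V k)" by (simp add: power2_eq_square algebra_simps)
    then show ?thesis using BD0 Lg0
      by (cases "norm (V k) = 0") (auto simp: mult_le_cancel_right)
  qed
  obtain Bc where Bc: "\<And>k. norm (c k) \<le> Bc"
    using convergent_imp_bounded[OF c] by (auto simp: bounded_iff)
  have ub: "norm (u k) \<le> Bc" for k using cb[of k] Bc[of k] by (simp add: u_def)
  define T where "T k = (w k, V k, u k)" for k
  have "range T \<subseteq> cball 0 (2 * Lg) \<times> (cball 0 (2 * Lg * BD) \<times> cball 0 Bc)"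
    using wb Vb ub by (auto simp: T_def)
  then have "bounded (range T)"
    by (rule bounded_subset[rotated]) (intro bounded_Times bounded_cball)
  then obtain lim s where s: "strict_mono s" and Ts: "(T \<circ> s) \<longlonglongrightarrow> lim"
    using bounded_imp_convergent_subsequence by blast
  obtain wl vb ub where lim: "lim = (wl, vb, ub)" by (cases lim) auto
  have wl: "(\<lambda>j. w (s j)) \<longlonglongrightarrow> wl" using tendsto_fst[OF Ts] by (simp add: lim T_def o_def)
  have vl: "(\<lambda>j. V (s j)) \<longlonglongrightarrow> vb" using tendsto_fst[OF tendsto_snd[OF Ts]] by (simp add: lim T_def o_def)
  have ul: "(\<lambda>j. u (s j)) \<longlonglongrightarrow> ub" using tendsto_snd[OF tendsto_snd[OF Ts]] by (simp add: lim T_def o_def)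
  have rs: "strict_mono (\<lambda>j. r (s j))" by (rule strict_mono_compose[OF r s])
  have xl: "(\<lambda>j. x (r (s j))) \<longlonglongrightarrow> xb" using LIMSEQ_subseq_LIMSEQ[OF x_lim rs] by (simp add: o_def)
  have gl: "(\<lambda>j. gamma (r (s j))) \<longlonglongrightarrow> gb" using LIMSEQ_subseq_LIMSEQ[OF gamma_lim rs] by (simp add: o_def)
  have ml: "(\<lambda>j. mu (r (s j))) \<longlonglongrightarrow> 0" using LIMSEQ_subseq_LIMSEQ[OF mu_lim rs] by (simp add: o_def)
  have cl: "(\<lambda>j. c (s j)) \<longlonglongrightarrow> c0" using LIMSEQ_subseq_LIMSEQ[OF c s] by (simp add: o_def)
  have zl: "(\<lambda>j. z (s j)) \<longlonglongrightarrow> S xb" unfolding z_def by (rule lip_tendsto[OF S_lip xl])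
  have pl: "(\<lambda>j. p (s j)) \<longlonglongrightarrow> S xb"
  proof -
    have "(\<lambda>j. 2 * mu (r (s j)) * Lg) \<longlonglongrightarrow> 2 * 0 * Lg" by (intro tendsto_intros ml)
    then have h0: "(\<lambda>j. 2 * mu (r (s j)) * Lg) \<longlonglongrightarrow> 0" by simp
    have "(\<lambda>j. norm (p (s j) - z (s j))) \<longlonglongrightarrow> 0"
      by (rule tendsto_sandwich[of "\<lambda>j. 0" _ _ "\<lambda>j. 2 * mu (r (s j)) * Lg", OF _ _ _ h0]) (use pnear in auto)
    then have "(\<lambda>j. p (s j) - z (s j)) \<longlonglongrightarrow> 0" by (simp add: tendsto_norm_zero_iff)
    from tendsto_add[OF this zl] show ?thesis by simp
  qed
  have subl: "g z' \<ge> g (S xb) + inner wl (z' - S xb) - eta/2 * (norm (z' - S xb))\<^sup>2" for z'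
  proof (rule tendsto_le[OF sequentially_bot])
    show "(\<lambda>j. g z') \<longlonglongrightarrow> g z'" by simp
    show "(\<lambda>j. g (p (s j)) + inner (w (s j)) (z' - p (s j)) - eta/2 * (norm (z' - p (s j)))\<^sup>2)
        \<longlonglongrightarrow> g (S xb) + inner wl (z' - S xb) - eta/2 * (norm (z' - S xb))\<^sup>2"
      by (intro tendsto_intros lip_tendsto[OF g_lip pl] wl pl)
    show "\<forall>\<^sub>F j in sequentially. g (p (s j)) + inner (w (s j)) (z' - p (s j)) - eta/2 * (norm (z' - p (s j)))\<^sup>2 \<le> g z'"
      using sub by simp
  qed
  have repl: "inner vb h = inner wl (blinfun_apply (DS xb) h)" for h
  proof (rule LIMSEQ_unique)
    show "(\<lambda>j. inner (V (s j)) h) \<longlonglongrightarrow> inner vb h" by (intro tendsto_intros vl)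
    have "(\<lambda>j. DS (x (r (s j)))) \<longlonglongrightarrow> DS xb" by (rule lip_tendsto[OF DS_lip xl])
    then have "(\<lambda>j. inner (w (s j)) (blinfun_apply (DS (x (r (s j)))) h)) \<longlonglongrightarrow> inner wl (blinfun_apply (DS xb) h)"
      by (intro tendsto_intros wl blinfun.tendsto) auto
    then show "(\<lambda>j. inner (V (s j)) h) \<longlonglongrightarrow> inner wl (blinfun_apply (DS xb) h)" by (simp add: rep)
  qed
  have est: "\<forall>eps>0. \<exists>d>0. \<forall>y. norm (y - xb) < d \<longrightarrow> g (S y) \<ge> g (S xb) + inner vb (y - xb) - eps * norm (y - xb)"
    using good_v_est[OF S_deriv S_lip subl repl] eta_pos by auto
  have nub: "norm ub \<le> c0"
  proof (rule tendsto_le[OF sequentially_bot cl])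
    show "(\<lambda>j. norm (u (s j))) \<longlonglongrightarrow> norm ub" by (intro tendsto_intros ul)
    show "\<forall>\<^sub>F j in sequentially. norm (u (s j)) \<le> c (s j)" using cb by (simp add: u_def)
  qed
  have Pid: "P k = x (r k) - gamma (r k) *\<^sub>R u k" for k
    using gamma_pos[of "r k"] by (simp add: u_def)
  have Pl: "(\<lambda>j. P (s j)) \<longlonglongrightarrow> xb - gb *\<^sub>R ub"
    unfolding Pid by (intro tendsto_intros xl gl ul)
  have A3: "gb > 0 \<longrightarrow> xb - gb *\<^sub>R ub \<in> proj C (xb - gb *\<^sub>R vb)"
  proof
    assume "gb > 0"
    show "xb - gb *\<^sub>R ub \<in> proj C (xb - gb *\<^sub>R vb)"
    proof (rule proj_limit[OF C_closed _ _ Pl])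
      show "P (s j) \<in> proj C (x (r (s j)) - gamma (r (s j)) *\<^sub>R V (s j))" for j by (rule P)
      show "(\<lambda>j. x (r (s j)) - gamma (r (s j)) *\<^sub>R V (s j)) \<longlonglongrightarrow> xb - gb *\<^sub>R vb"
        by (intro tendsto_intros xl gl vl)
    qed
  qed
  have A4: "gb = 0 \<longrightarrow> ub \<in> frechet_subdiff (\<lambda>y. ereal (g (S y)) + iota C y) xb"
  proof
    assume gb0: "gb = 0"
    obtain rho r0 where rho: "rho > 0" and r0: "r0 > 0" and nrm: "\<And>p z t q. p \<in> C \<Longrightarrow> norm (p - xb) < rho \<Longrightarrow>
        t > 0 \<Longrightarrow> p \<in> proj C (p + t *\<^sub>R z) \<Longrightarrow> q \<in> C \<Longrightarrow> inner z (q - p) \<le> norm z / (2 * r0) * (norm (q - p))\<^sup>2"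
      using prox_reg_normal[OF C_closed C_pr xb_in] by blast
    define zeta where "zeta = ub - vb"
    have Pl0: "(\<lambda>j. P (s j)) \<longlonglongrightarrow> xb" using Pl gb0 by simp
    then have ev: "\<forall>\<^sub>F j in sequentially. norm (P (s j) - xb) < rho"
      using rho unfolding tendsto_iff dist_norm by blast
    have PC: "P k \<in> C" for k using P[of k] by (simp add: proj_def)
    have Pn: "P k \<in> proj C (P k + gamma (r k) *\<^sub>R (u k - V k))" for k
    proof -
      have "P k + gamma (r k) *\<^sub>R (u k - V k) = x (r k) - gamma (r k) *\<^sub>R V k"
        by (simp add: Pid algebra_simps)
      then show ?thesis using P[of k] by simp
    qed
    have zl: "(\<lambda>j. u (s j) - V (s j)) \<longlonglongrightarrow> zeta" unfolding zeta_def by (intro tendsto_intros ul vl)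
    have nz: "inner zeta (q - xb) \<le> norm zeta / (2 * r0) * (norm (q - xb))\<^sup>2" if q: "q \<in> C" for q
    proof (rule tendsto_le[OF sequentially_bot])
      show "(\<lambda>j. inner (u (s j) - V (s j)) (q - P (s j))) \<longlonglongrightarrow> inner zeta (q - xb)"
        by (intro tendsto_intros zl Pl0)
      show "(\<lambda>j. norm (u (s j) - V (s j)) / (2 * r0) * (norm (q - P (s j)))\<^sup>2) \<longlonglongrightarrow> norm zeta / (2 * r0) * (norm (q - xb))\<^sup>2"
        by (intro tendsto_intros zl Pl0) (use r0 in auto)
      show "\<forall>\<^sub>F j in sequentially. inner (u (s j) - V (s j)) (q - P (s j)) \<le> norm (u (s j) - V (s j)) / (2 * r0) * (norm (q - P (s j)))\<^sup>2"
        using ev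
      proof eventually_elim
        case (elim j)
        show ?case by (rule nrm[OF PC elim gamma_pos Pn q])
      qed
    qed
    have "vb + zeta \<in> frechet_subdiff (\<lambda>y. ereal (g (S y)) + iota C y) xb"
      by (rule in_subdiff_sum[where F="\<lambda>y. g (S y)", OF _ nz _ xb_in]) (use est r0 in auto)
    then show "ub \<in> frechet_subdiff (\<lambda>y. ereal (g (S y)) + iota C y) xb" by (simp add: zeta_def)
  qed
  show ?thesis using est nub A3 A4 by blast
qed


lemma Mmeas_less:
  assumes "Mmeas gam J C xb < ereal cc"
  shows "\<exists>v p. v \<in> frechet_subdiff (\<lambda>x. ereal (J x)) xb \<and> p \<in> proj C (xb - gam *\<^sub>R v)
           \<and> norm ((1/gam) *\<^sub>R (xb - p)) \<le> cc"
proof -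
  from assms obtain s where s: "s \<in> {(1 / gam) *\<^sub>R (xb - p) | p v.
              v \<in> frechet_subdiff (\<lambda>x. ereal (J x)) xb \<and> p \<in> proj C (xb - gam *\<^sub>R v)}"
      and sl: "ereal (norm s) < ereal cc"
    unfolding Mmeas_def dist0_def INF_less_iff by blast
  from s obtain p v where sp: "s = (1 / gam) *\<^sub>R (xb - p)" "v \<in> frechet_subdiff (\<lambda>x. ereal (J x)) xb"
      "p \<in> proj C (xb - gam *\<^sub>R v)" by blast
  have "norm ((1/gam) *\<^sub>R (xb - p)) \<le> cc" using sl sp(1) by simp
  then show ?thesis using sp by blast
qed

lemma Mmeas_le:
  assumes "v \<in> frechet_subdiff (\<lambda>x. ereal (J x)) xb" and "p \<in> proj C (xb - gam *\<^sub>R v)"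
  shows "Mmeas gam J C xb \<le> ereal (norm ((1/gam) *\<^sub>R (xb - p)))"
  unfolding Mmeas_def dist0_def by (rule INF_lower) (use assms in blast)

lemma dist0_le: "u \<in> A \<Longrightarrow> dist0 A \<le> ereal (norm u)"
  unfolding dist0_def by (rule INF_lower)

lemma dist0_nonneg: "dist0 A \<ge> 0"
  unfolding dist0_def by (rule INF_greatest) simp

lemma Mmeas_nonneg: "Mmeas gam J C xb \<ge> 0"
  unfolding Mmeas_def by (rule dist0_nonneg)

lemma est_fs:
  fixes F :: "'x::real_inner \<Rightarrow> real"
  assumes "\<forall>eps>0. \<exists>d>0. \<forall>y. norm (y - xb) < d \<longrightarrow> F y \<ge> F xb + inner v (y - xb) - eps * norm (y - xb)"
  shows "v \<in> frechet_subdiff (\<lambda>y. ereal (F y)) xb"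
proof -
  have nm: "\<And>y. ereal (F y) \<noteq> -\<infinity>" by simp
  show ?thesis unfolding fs_char[of "\<lambda>y. ereal (F y)" xb "F xb", OF refl nm]
    using assms by fastforce
qed

theorem theorem1:
  fixes S :: "'x::euclidean_space \<Rightarrow> 'z::euclidean_space"
    and DS :: "'x \<Rightarrow> ('x \<Rightarrow>\<^sub>L 'z)"
    and g :: "'z \<Rightarrow> real" and eta :: real and C :: "'x set"
    and x :: "nat \<Rightarrow> 'x" and xb :: 'x
    and gamma :: "nat \<Rightarrow> real" and gb :: real
    and mu :: "nat \<Rightarrow> real"
  assumes S_deriv: "\<And>y. (S has_derivative blinfun_apply (DS y)) (at y)"
    and S_lip: "\<exists>L. L-lipschitz_on UNIV S"
    and DS_lip: "\<exists>L. L-lipschitz_on UNIV DS"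
    and g_lip: "\<exists>L. L-lipschitz_on UNIV g"
    and eta_pos: "eta > 0"
    and g_wc: "weakly_convex eta g"
    and C_ne: "C \<noteq> {}" and C_closed: "closed C" and C_pr: "prox_regular C"
    and argmin_ne: "\<exists>y\<in>C. \<forall>w\<in>C. g (S y) \<le> g (S w)"
    and x_in: "\<And>n. x n \<in> C" and x_lim: "x \<longlonglongrightarrow> xb" and xb_in: "xb \<in> C"
    and gamma_pos: "\<And>n. gamma n > 0" and gamma_lim: "gamma \<longlonglongrightarrow> gb" and gb_nn: "gb \<ge> 0"
    and mu_pos: "\<And>n. mu n > 0" and mu_le: "\<And>n. mu n \<le> 1 / (2 * eta)"
    and mu_dec: "decseq mu" and mu_lim: "mu \<longlonglongrightarrow> 0"
  shows "Liminf sequentially (\<lambda>n. Mmeas (gamma n) (\<lambda>y. moreau (mu n) g (S y)) C (x n))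
           \<ge> (if gb > 0 then Mmeas gb (\<lambda>y. g (S y)) C xb
              else dist0 (frechet_subdiff (\<lambda>y. ereal (g (S y)) + iota C y) xb))
       \<and> (Liminf sequentially (\<lambda>n. Mmeas (gamma n) (\<lambda>y. moreau (mu n) g (S y)) C (x n)) = 0
            \<longrightarrow> 0 \<in> frechet_subdiff (\<lambda>y. ereal (g (S y)) + iota C y) xb)"
proof -
  obtain LS where LS: "LS-lipschitz_on UNIV S" using S_lip by blast
  obtain LD where LD: "LD-lipschitz_on UNIV DS" using DS_lip by blast
  obtain Lg where Lg: "Lg-lipschitz_on UNIV g" using g_lip by blast
  define M where "M n = Mmeas (gamma n) (\<lambda>y. moreau (mu n) g (S y)) C (x n)" for n
  define Tgt where "Tgt = (if gb > 0 then Mmeas gb (\<lambda>y. g (S y)) C xb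
              else dist0 (frechet_subdiff (\<lambda>y. ereal (g (S y)) + iota C y) xb))"
  have app: "\<exists>vb ub. (\<forall>eps>0. \<exists>d>0. \<forall>y. norm (y - xb) < d \<longrightarrow> g (S y) \<ge> g (S xb) + inner vb (y - xb) - eps * norm (y - xb))
           \<and> norm ub \<le> c0
           \<and> (gb > 0 \<longrightarrow> xb - gb *\<^sub>R ub \<in> proj C (xb - gb *\<^sub>R vb))
           \<and> (gb = 0 \<longrightarrow> ub \<in> frechet_subdiff (\<lambda>y. ereal (g (S y)) + iota C y) xb)"
    if r: "strict_mono r" and hk: "\<And>k. M (r k) < ereal (c k)" and c: "c \<longlonglongrightarrow> c0" for r c c0
  proof -
    have "\<forall>k. \<exists>v p. v \<in> frechet_subdiff (\<lambda>y. ereal (moreau (mu (r k)) g (S y))) (x (r k))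
        \<and> p \<in> proj C (x (r k) - gamma (r k) *\<^sub>R v) \<and> norm ((1/gamma (r k)) *\<^sub>R (x (r k) - p)) \<le> c k"
      using Mmeas_less hk unfolding M_def by blast
    then obtain V P where VP: "\<And>k. V k \<in> frechet_subdiff (\<lambda>y. ereal (moreau (mu (r k)) g (S y))) (x (r k))"
        "\<And>k. P k \<in> proj C (x (r k) - gamma (r k) *\<^sub>R V k)"
        "\<And>k. norm ((1/gamma (r k)) *\<^sub>R (x (r k) - P k)) \<le> c k"
      by metis
    show ?thesis
      by (rule core[OF S_deriv LS LD Lg eta_pos g_wc C_closed C_pr x_lim xb_in gamma_pos gamma_lim gb_nn
            mu_pos mu_le mu_lim r VP c])
  qed
  have part1: "Tgt \<le> Liminf sequentially M"
    unfolding le_Liminf_iff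
  proof (intro allI impI)
    fix y assume yT: "y < Tgt"
    show "\<forall>\<^sub>F n in sequentially. y < M n"
    proof (rule ccontr)
      assume "\<not> ?thesis"
      then have fr: "frequently (\<lambda>n. M n \<le> y) sequentially" by (simp add: not_eventually not_less)
      obtain cc where cc: "y < ereal cc" "ereal cc < Tgt" using ereal_dense2[OF yT] by blast
      have "frequently (\<lambda>n. M n < ereal cc) sequentially"
        using fr by (rule frequently_elim1) (use cc in auto)
      then have "\<exists>r::nat\<Rightarrow>nat. strict_mono r \<and> (\<forall>k. M (r k) < ereal cc)" by (rule freq_subseq)
      then obtain r :: "nat \<Rightarrow> nat" where r: "strict_mono r" and rk: "\<And>k. M (r k) < ereal cc" by blast
      obtain vb ub where est: "\<forall>eps>0. \<exists>d>0. \<forall>y. norm (y - xb) < d \<longrightarrow> g (S y) \<ge> g (S xb) + inner vb (y - xb) - eps * norm (y - xb)"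
        and nub: "norm ub \<le> cc"
        and A3: "gb > 0 \<longrightarrow> xb - gb *\<^sub>R ub \<in> proj C (xb - gb *\<^sub>R vb)"
        and A4: "gb = 0 \<longrightarrow> ub \<in> frechet_subdiff (\<lambda>y. ereal (g (S y)) + iota C y) xb"
        using app[OF r rk tendsto_const] by blast
      have "Tgt \<le> ereal (norm ub)"
      proof (cases "gb > 0")
        case True
        have "Mmeas gb (\<lambda>y. g (S y)) C xb \<le> ereal (norm ((1/gb) *\<^sub>R (xb - (xb - gb *\<^sub>R ub))))"
          by (rule Mmeas_le[OF est_fs[OF est]]) (use A3 True in blast)
        then show ?thesis using True by (simp add: Tgt_def)
      next
        case False
        then have "gb = 0" using gb_nn by simp
        then show ?thesis using A4 False by (simp add: Tgt_def dist0_le)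
      qed
      then show False using nub cc by (meson ereal_less_eq(3) leD order_trans)
    qed
  qed
  have part2: "0 \<in> frechet_subdiff (\<lambda>y. ereal (g (S y)) + iota C y) xb" if L0: "Liminf sequentially M = 0"
  proof -
    have fr: "\<forall>N. \<exists>n\<ge>N. M n < ereal e" if e: "e > 0" for e
    proof (rule ccontr)
      assume "\<not> ?thesis"
      then have "\<forall>\<^sub>F n in sequentially. M n \<ge> ereal e"
        unfolding eventually_sequentially by (auto simp: not_less)
      then have "ereal e \<le> Liminf sequentially M"
        unfolding le_Liminf_iff by (auto elim: eventually_mono)
      then show False using L0 e by simp
    qed
    define ee where "ee k = inverse (real (Suc k))" for k
    have ee0: "ee k > 0" for k by (simp add: ee_def)
    have "\<forall>k N. \<exists>n\<ge>N. M n < ereal (ee k)" using fr ee0 by blast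
    then obtain f where f: "\<And>k N. f k N \<ge> N" "\<And>k N. M (f k N) < ereal (ee k)" by metis
    define r where "r = rec_nat (f 0 0) (\<lambda>k rk. f (Suc k) (Suc rk))"
    have r0: "r 0 = f 0 0" and rS: "r (Suc k) = f (Suc k) (Suc (r k))" for k by (simp_all add: r_def)
    have rm: "strict_mono r"
      unfolding strict_mono_Suc_iff using f(1) rS by (metis Suc_le_lessD)
    have rk: "M (r k) < ereal (ee k)" for k
      by (cases k) (simp_all add: r0 rS f(2))
    have eel: "ee \<longlonglongrightarrow> 0" unfolding ee_def by (rule LIMSEQ_inverse_real_of_nat)
    obtain vb ub where est: "\<forall>eps>0. \<exists>d>0. \<forall>y. norm (y - xb) < d \<longrightarrow> g (S y) \<ge> g (S xb) + inner vb (y - xb) - eps * norm (y - xb)"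
        and nub: "norm ub \<le> 0"
        and A3: "gb > 0 \<longrightarrow> xb - gb *\<^sub>R ub \<in> proj C (xb - gb *\<^sub>R vb)"
        and A4: "gb = 0 \<longrightarrow> ub \<in> frechet_subdiff (\<lambda>y. ereal (g (S y)) + iota C y) xb"
      using app[OF rm rk eel] by blast
    have ub0: "ub = 0" using nub by simp
    show ?thesis
    proof (cases "gb > 0")
      case False
      then have "gb = 0" using gb_nn by simp
      then show ?thesis using A4 ub0 by simp
    next
      case True
      have xp: "xb \<in> proj C (xb - gb *\<^sub>R vb)" using A3 True ub0 by simp
      have nrm: "inner (- vb) (q - xb) \<le> (1 / (2 * gb)) * (norm (q - xb))\<^sup>2" if q: "q \<in> C" for q
      proof -
        have "norm (xb - gb *\<^sub>R vb - xb) \<le> norm (xb - gb *\<^sub>R vb - q)" using xp q by (simp add: proj_def)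
        then have "norm (- (gb *\<^sub>R vb)) \<le> norm ((xb - q) + (- (gb *\<^sub>R vb)))" by (simp add: algebra_simps)
        then have "(norm (- (gb *\<^sub>R vb)))\<^sup>2 \<le> (norm ((xb - q) + (- (gb *\<^sub>R vb))))\<^sup>2"
          by (intro power_mono) auto
        then have "0 \<le> (norm (xb - q))\<^sup>2 + 2 * inner (xb - q) (- (gb *\<^sub>R vb))"
          unfolding norm_shift by simp
        then have "2 * gb * inner (- vb) (q - xb) \<le> (norm (q - xb))\<^sup>2"
          by (simp add: inner_diff_left inner_diff_right inner_commute norm_minus_commute algebra_simps)
        then show ?thesis using True by (simp add: field_simps)
      qed
      have "vb + (- vb) \<in> frechet_subdiff (\<lambda>y. ereal (g (S y)) + iota C y) xb"
        by (rule in_subdiff_sum[where F="\<lambda>y. g (S y)", OF _ nrm _ xb_in]) (use est True in auto)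
      then show ?thesis by simp
    qed
  qed
  show ?thesis using part1 part2 unfolding M_def Tgt_def by blast
qed


end
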